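(* Let $W:\mathbb{R}^d\times\mathcal{P}_2(\mathbb{R}^d)\to\mathbb{R}^d$ be continuous and suppose there is $\beta>0$ such that for all $X,Y\in L^2(\Omega,\mathbb{R}^d)$, $\mathbb{E}[(W(X,\mathcal{L}(X))-W(Y,\mathcal{L}(Y)))\cdot(X-Y)]\ge\beta\,\mathbb{E}[|W(X,\mathcal{L}(X))-W(Y,\mathcal{L}(Y))|^2]$. Then (i) $\mathbb{E}[|W(X,\mathcal{L}(X))-W(Y,\mathcal{L}(Y))|^2]\le\frac1{\beta^2}\mathbb{E}[|X-Y|^2]$ for all $X,Y\in L^2(\Omega,\mathbb{R}^d)$; and (ii) $\sup_{\mu\in\mathcal{P}_2(\mathbb{R}^d)}\|W(\cdot,\mu)\|_{Lip}\le\frac1\beta$.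
   Context: $(\Omega,\mathcal{A},\mathbb{P})$ is a standard atomless probability space, $\mathcal{L}(X)$ the law of $X$, $\mathcal{P}_2(\mathbb{R}^d)$ with the 2-Wasserstein distance; $\|\cdot\|_{Lip}$ the Lipschitz seminorm in $x$. *)

theory Defs
  imports "HOL-Probability.Probability"
begin

definition atomless :: "'w measure \<Rightarrow> bool" where
  "atomless M \<longleftrightarrow> (\<forall>A\<in>sets M. measure M A > 0 \<longrightarrow>
      (\<exists>B\<in>sets M. B \<subseteq> A \<and> 0 < measure M B \<and> measure M B < measure M A))"

definition P2 :: "'a::euclidean_space measure set" where
  "P2 = {\<mu>. prob_space \<mu> \<and> sets \<mu> = sets borel \<and> integrable \<mu> (\<lambda>x. norm x ^ 2)}"

definition couplings :: "'a::euclidean_space measure \<Rightarrow> 'a measure \<Rightarrow> ('a \<times> 'a) measure set" where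
  "couplings \<mu> \<nu> = {\<pi>. prob_space \<pi> \<and> sets \<pi> = sets (borel :: ('a \<times> 'a) measure) \<and>
      distr \<pi> borel fst = \<mu> \<and> distr \<pi> borel snd = \<nu>}"

text \<open>2-Wasserstein distance (meaningful for measures in P2, where every coupling
  has integrable quadratic cost).\<close>
definition W2 :: "'a::euclidean_space measure \<Rightarrow> 'a measure \<Rightarrow> real" where
  "W2 \<mu> \<nu> = sqrt (INF \<pi>\<in>couplings \<mu> \<nu>. (\<integral>p. (norm (fst p - snd p))\<^sup>2 \<partial>\<pi>))"

text \<open>Continuity of W on R^d x P2 (product of Euclidean and W2 metric topologies),
  expressed sequentially (equivalent for metric spaces).\<close>
definition continuous_W2 :: "('a::euclidean_space \<Rightarrow> 'a measure \<Rightarrow> 'a) \<Rightarrow> bool" where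
  "continuous_W2 W \<longleftrightarrow> (\<forall>x xs \<mu> \<mu>s. \<mu> \<in> P2 \<and> (\<forall>n. \<mu>s n \<in> P2) \<and> xs \<longlonglongrightarrow> x \<and>
      (\<lambda>n. W2 (\<mu>s n) \<mu>) \<longlonglongrightarrow> 0 \<longrightarrow> (\<lambda>n. W (xs n) (\<mu>s n)) \<longlonglongrightarrow> W x \<mu>)"

definition L2 :: "'w measure \<Rightarrow> ('w \<Rightarrow> 'a::euclidean_space) set" where
  "L2 M = {X. X \<in> borel_measurable M \<and> integrable M (\<lambda>\<omega>. (norm (X \<omega>))\<^sup>2)}"

definition law :: "'w measure \<Rightarrow> ('w \<Rightarrow> 'a::euclidean_space) \<Rightarrow> 'a measure" where
  "law M X = distr M borel X"

end

theory Submission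
  imports Defs
begin


lemma L2_diff_sq_int:
  fixes X Y :: "'w \<Rightarrow> 'a::euclidean_space"
  assumes "X \<in> L2 M" "Y \<in> L2 M"
  shows "integrable M (\<lambda>\<omega>. (norm (X \<omega> - Y \<omega>))\<^sup>2)"
proof -
  have [measurable]: "X \<in> borel_measurable M" "Y \<in> borel_measurable M"
    using assms by (auto simp: L2_def)
  have i: "integrable M (\<lambda>\<omega>. 2 * (norm (X \<omega>))\<^sup>2 + 2 * (norm (Y \<omega>))\<^sup>2)"
    using assms by (auto simp: L2_def)
  show ?thesis
  proof (rule Bochner_Integration.integrable_bound[OF i])
    show "(\<lambda>\<omega>. (norm (X \<omega> - Y \<omega>))\<^sup>2) \<in> borel_measurable M" by measurable
    show "AE x in M. norm ((norm (X x - Y x))\<^sup>2) \<le> norm (2 * (norm (X x))\<^sup>2 + 2 * (norm (Y x))\<^sup>2)"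
    proof (intro AE_I2)
      fix x
      have t: "norm (X x - Y x) \<le> norm (X x) + norm (Y x)" by (rule norm_triangle_ineq4)
      have "(norm (X x - Y x))\<^sup>2 \<le> (norm (X x) + norm (Y x))\<^sup>2"
        using t by (intro power_mono) auto
      also have "\<dots> \<le> 2 * (norm (X x))\<^sup>2 + 2 * (norm (Y x))\<^sup>2"
        using zero_le_square[of "norm (X x) - norm (Y x)"] by (simp add: power2_eq_square algebra_simps)
      finally show "norm ((norm (X x - Y x))\<^sup>2) \<le> norm (2 * (norm (X x))\<^sup>2 + 2 * (norm (Y x))\<^sup>2)"
        by simp
    qed
  qed
qed

lemma part_i:
  fixes D E :: "'w \<Rightarrow> 'a::euclidean_space" and \<beta> :: real
  assumes b: "\<beta> > 0"
    and mono: "(\<integral>\<omega>. D \<omega> \<bullet> E \<omega> \<partial>M) \<ge> \<beta> * (\<integral>\<omega>. (norm (D \<omega>))\<^sup>2 \<partial>M)"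
    and iE: "integrable M (\<lambda>\<omega>. (norm (E \<omega>))\<^sup>2)"
  shows "(\<integral>\<omega>. (norm (D \<omega>))\<^sup>2 \<partial>M) \<le> 1 / \<beta>\<^sup>2 * (\<integral>\<omega>. (norm (E \<omega>))\<^sup>2 \<partial>M)"
proof -
  define A where "A = (\<integral>\<omega>. (norm (D \<omega>))\<^sup>2 \<partial>M)"
  define B where "B = (\<integral>\<omega>. (norm (E \<omega>))\<^sup>2 \<partial>M)"
  have B0: "B \<ge> 0" unfolding B_def by (rule integral_nonneg_AE) auto
  have R0: "0 \<le> 1 / \<beta>\<^sup>2 * B" using B0 by simp
  show ?thesis
  proof (cases "integrable M (\<lambda>\<omega>. (norm (D \<omega>))\<^sup>2) \<and> integrable M (\<lambda>\<omega>. D \<omega> \<bullet> E \<omega>)")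
    case False
    show ?thesis
    proof (cases "integrable M (\<lambda>\<omega>. (norm (D \<omega>))\<^sup>2)")
      case False
      then have "A = 0" unfolding A_def by (simp add: not_integrable_integral_eq)
      then show ?thesis using R0 by (simp add: A_def B_def)
    next
      case True
      with False have "\<not> integrable M (\<lambda>\<omega>. D \<omega> \<bullet> E \<omega>)" by blast
      then have "(\<integral>\<omega>. D \<omega> \<bullet> E \<omega> \<partial>M) = 0" by (simp add: not_integrable_integral_eq)
      with mono have "\<beta> * A \<le> 0" by (simp add: A_def)
      then have "A \<le> 0" using b by (simp add: mult_le_0_iff)
      then show ?thesis using R0 unfolding A_def B_def by linarith
    qed
  next
    case True
    have pw: "D \<omega> \<bullet> E \<omega> \<le> (\<beta> * (norm (D \<omega>))\<^sup>2 + (norm (E \<omega>))\<^sup>2 / \<beta>) / 2" for \<omega>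
    proof -
      have "D \<omega> \<bullet> E \<omega> \<le> norm (D \<omega>) * norm (E \<omega>)" by (rule norm_cauchy_schwarz)
      moreover have "0 \<le> (\<beta> * norm (D \<omega>) - norm (E \<omega>))\<^sup>2" by simp
      then have "2 * \<beta> * (norm (D \<omega>) * norm (E \<omega>)) \<le> \<beta>\<^sup>2 * (norm (D \<omega>))\<^sup>2 + (norm (E \<omega>))\<^sup>2"
        by (simp add: power2_eq_square algebra_simps)
      then have "norm (D \<omega>) * norm (E \<omega>) \<le> (\<beta> * (norm (D \<omega>))\<^sup>2 + (norm (E \<omega>))\<^sup>2 / \<beta>) / 2"
        using b by (simp add: field_simps power2_eq_square)
      ultimately show ?thesis by linarith
    qed
    have "(\<integral>\<omega>. D \<omega> \<bullet> E \<omega> \<partial>M) \<le> (\<integral>\<omega>. (\<beta> * (norm (D \<omega>))\<^sup>2 + (norm (E \<omega>))\<^sup>2 / \<beta>) / 2 \<partial>M)"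
      using True iE pw by (intro integral_mono) auto
    also have "\<dots> = (\<beta> * A + B / \<beta>) / 2"
      using True iE by (simp add: A_def B_def)
    finally have "\<beta> * A \<le> (\<beta> * A + B / \<beta>) / 2" using mono by (simp add: A_def)
    then have "\<beta> * A \<le> B / \<beta>" by (simp add: mult.commute)
    then have "\<beta> * \<beta> * A \<le> B" using b by (simp add: field_simps)
    then show ?thesis using b by (simp add: A_def B_def field_simps power2_eq_square)
  qed
qed


context prob_space
begin

lemma atomless_small:
  assumes al: "atomless M" and A: "A \<in> events" "prob A > 0" and d: "\<delta> > 0"
  shows "\<exists>B\<in>events. B \<subseteq> A \<and> 0 < prob B \<and> prob B \<le> \<delta>"
proof -
  have "\<exists>B\<in>events. B \<subseteq> A \<and> 0 < prob B \<and> prob B \<le> prob A / 2^n" for n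
  proof (induction n)
    case 0
    then show ?case using A by auto
  next
    case (Suc n)
    then obtain B where B: "B \<in> events" "B \<subseteq> A" "0 < prob B" "prob B \<le> prob A / 2^n" by blast
    from al B obtain C where C: "C \<in> events" "C \<subseteq> B" "0 < prob C" "prob C < prob B"
      unfolding atomless_def by blast
    show ?case
    proof (cases "prob C \<le> prob B / 2")
      case True
      then show ?thesis using B C by (intro bexI[of _ C]) auto
    next
      case False
      have "prob (B - C) = prob B - prob C" using B C by (simp add: finite_measure_Diff)
      then show ?thesis using B C False by (intro bexI[of _ "B - C"]) auto
    qed
  qed
  moreover obtain n where n: "(1/2::real)^n < \<delta>" using real_arch_pow_inv[OF d, of "1/2"] by auto
  moreover have "prob A / 2^n \<le> (1/2::real)^n"
    using prob_le_1[of A] by (simp add: power_one_over divide_right_mono)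
  ultimately show ?thesis by (meson order.trans less_imp_le)
qed

lemma atomless_sierpinski:
  assumes al: "atomless M" and S: "S \<in> events" and t: "0 \<le> t" "t \<le> prob S"
  shows "\<exists>E\<in>events. E \<subseteq> S \<and> prob E = t"
proof -
  define ok where "ok B \<longleftrightarrow> B \<in> events \<and> B \<subseteq> S \<and> prob B \<le> t" for B
  define R where "R B C \<longleftrightarrow> (C \<in> events \<and> C \<subseteq> S - B \<and> prob C \<le> t - prob B \<and>
      (\<forall>D\<in>events. D \<subseteq> S - B \<and> prob D \<le> t - prob B \<longrightarrow> prob D \<le> 2 * prob C))" for B C
  have step: "\<exists>C. ok B \<longrightarrow> R B C" for B
  proof (cases "ok B")
    case True
    define Q where "Q = {prob D | D. D \<in> events \<and> D \<subseteq> S - B \<and> prob D \<le> t - prob B}"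
    have Qne: "Q \<noteq> {}" using True unfolding Q_def ok_def by (auto intro!: exI[of _ "{}"])
    have Qbd: "bdd_above Q" unfolding Q_def by (intro bdd_aboveI[of _ 1]) auto
    have up: "prob D \<le> Sup Q" if "D \<in> events" "D \<subseteq> S - B" "prob D \<le> t - prob B" for D
      using that Qbd by (intro cSup_upper) (auto simp: Q_def)
    show ?thesis
    proof (cases "Sup Q \<le> 0")
      case True
      then show ?thesis using up \<open>ok B\<close> unfolding R_def ok_def
        by (intro exI[of _ "{}"]) force
    next
      case False
      then have "Sup Q / 2 < Sup Q" by simp
      then obtain q where "q \<in> Q" "Sup Q / 2 < q" using Qne by (meson less_cSupE)
      then obtain C where C: "C \<in> events" "C \<subseteq> S - B" "prob C \<le> t - prob B" "Sup Q / 2 < prob C"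
        unfolding Q_def by blast
      have "R B C" unfolding R_def using C up by force
      then show ?thesis by blast
    qed
  qed auto
  then obtain f where f: "\<And>B. ok B \<Longrightarrow> R B (f B)" by metis
  define Bs where "Bs = rec_nat {} (\<lambda>_ B. B \<union> f B)"
  have Bs0: "Bs 0 = {}" and BsS: "Bs (Suc n) = Bs n \<union> f (Bs n)" for n by (simp_all add: Bs_def)
  have okB: "ok (Bs n)" for n
  proof (induction n)
    case 0 then show ?case using t by (simp add: ok_def Bs0)
  next
    case (Suc n)
    have R: "R (Bs n) (f (Bs n))" using f Suc by blast
    have "prob (Bs n \<union> f (Bs n)) = prob (Bs n) + prob (f (Bs n))"
      using R Suc unfolding R_def ok_def by (intro finite_measure_Union) auto
    then show ?case using R Suc unfolding R_def ok_def BsS by auto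
  qed
  have Rn: "R (Bs n) (f (Bs n))" for n using f okB by blast
  have Padd: "prob (Bs (Suc n)) = prob (Bs n) + prob (f (Bs n))" for n
    using Rn[of n] okB[of n] unfolding R_def ok_def BsS by (intro finite_measure_Union) auto
  have inc: "incseq Bs" unfolding incseq_Suc_iff BsS by auto
  have ev: "range Bs \<subseteq> events" using okB ok_def by auto
  define B where "B = (\<Union>n. Bs n)"
  have Bev: "B \<in> events" using ev unfolding B_def by auto
  have BS: "B \<subseteq> S" using okB unfolding B_def ok_def by auto
  have lim: "(\<lambda>n. prob (Bs n)) \<longlonglongrightarrow> prob B"
    unfolding B_def using ev inc by (rule finite_Lim_measure_incseq)
  have Ble: "prob B \<le> t"
    using lim okB unfolding ok_def by (intro LIMSEQ_le_const2[OF lim]) auto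
  have Bnle: "prob (Bs n) \<le> prob B" for n
    using ev Bev unfolding B_def by (intro finite_measure_mono) auto
  show ?thesis
  proof (cases "prob B = t")
    case True then show ?thesis using Bev BS by blast
  next
    case False
    then have lt: "prob B < t" using Ble by simp
    have "prob (S - B) = prob S - prob B" using S Bev BS by (simp add: finite_measure_Diff)
    then have "prob (S - B) > 0" using lt t by simp
    then obtain D where D: "D \<in> events" "D \<subseteq> S - B" "0 < prob D" "prob D \<le> t - prob B"
      using atomless_small[OF al, of "S - B" "t - prob B"] S Bev lt by auto
    have grow: "prob (f (Bs n)) \<ge> prob D / 2" for n
    proof -
      have "D \<subseteq> S - Bs n" using D(2) unfolding B_def by auto
      moreover have "prob D \<le> t - prob (Bs n)" using D(4) Bnle[of n] by simp
      ultimately show ?thesis using Rn[of n] D(1) unfolding R_def by force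
    qed
    have lin: "prob (Bs n) \<ge> real n * (prob D / 2)" for n
    proof (induction n)
      case 0 then show ?case by (simp add: Bs0)
    next
      case (Suc n) then show ?case using Padd[of n] grow[of n] by (simp add: algebra_simps)
    qed
    obtain n where n: "real n * (prob D / 2) > 1"
      using ex_less_of_nat_mult[of "prob D / 2" 1] D(3) by auto
    then show ?thesis using lin[of n] prob_le_1[of "Bs n"] by linarith
  qed
qed

end


context prob_space
begin

lemma atomless_partition:
  assumes al: "atomless M" and V: "finite V" "V \<noteq> {}"
  shows "\<And>S. S \<in> events \<Longrightarrow> (\<forall>v\<in>V. p v \<ge> (0::real)) \<Longrightarrow> (\<Sum>v\<in>V. p v) = prob S \<Longrightarrow>
    \<exists>E. (\<forall>v\<in>V. E v \<in> events \<and> E v \<subseteq> S \<and> prob (E v) = p v) \<and> disjoint_family_on E V \<and> (\<Union>v\<in>V. E v) = S"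
  using V
proof (induction V rule: finite_ne_induct)
  case (singleton a)
  then show ?case by (intro exI[of _ "\<lambda>_. S"]) (auto simp: disjoint_family_on_def)
next
  case (insert a V)
  have s: "p a + (\<Sum>v\<in>V. p v) = prob S" using insert by simp
  have "(\<Sum>v\<in>V. p v) \<ge> 0" using insert by (intro sum_nonneg) auto
  then obtain Ea where Ea: "Ea \<in> events" "Ea \<subseteq> S" "prob Ea = p a"
    using atomless_sierpinski[OF al \<open>S \<in> events\<close>, of "p a"] insert s by auto
  have "prob (S - Ea) = prob S - p a" using Ea insert by (simp add: finite_measure_Diff)
  then have "sum p V = prob (S - Ea)" using s by simp
  moreover have "S - Ea \<in> events" using Ea insert by auto
  moreover have "\<forall>v\<in>V. p v \<ge> 0" using insert by auto
  ultimately obtain E where E: "\<forall>v\<in>V. E v \<in> events \<and> E v \<subseteq> S - Ea \<and> prob (E v) = p v"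
    "disjoint_family_on E V" "(\<Union>v\<in>V. E v) = S - Ea"
    using insert.IH[of "S - Ea"] by blast
  show ?case
  proof (intro exI[of _ "E(a := Ea)"] conjI)
    show "\<forall>v\<in>insert a V. (E(a := Ea)) v \<in> events \<and> (E(a := Ea)) v \<subseteq> S \<and> prob ((E(a := Ea)) v) = p v"
      using E Ea insert by auto
    show "disjoint_family_on (E(a := Ea)) (insert a V)"
      using E(1,2) \<open>a \<notin> V\<close> unfolding disjoint_family_on_def by (auto; blast)
    show "(\<Union>v\<in>insert a V. (E(a := Ea)) v) = S"
    proof -
      have "(\<Union>v\<in>insert a V. (E(a := Ea)) v) = Ea \<union> (\<Union>v\<in>V. E v)"
        using \<open>a \<notin> V\<close> by (auto split: if_splits)
      then show ?thesis using E(3) Ea by auto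
    qed
  qed
qed

lemma atomless_realize:
  fixes g :: "'b \<Rightarrow> 'c::euclidean_space"
  assumes al: "atomless M" and N: "prob_space N" and g: "simple_function N g"
  shows "\<exists>X. simple_function M X \<and> distr M borel X = distr N borel g"
proof -
  define V where "V = g ` space N"
  have Vf: "finite V" using g unfolding V_def simple_function_def by auto
  have Vne: "V \<noteq> {}" using prob_space.not_empty[OF N] unfolding V_def by auto
  define C where "C v = g -` {v} \<inter> space N" for v
  have Cs: "C v \<in> sets N" for v using g unfolding C_def by (rule simple_functionD(2))
  have Cdisj: "disjoint_family_on C V" unfolding C_def disjoint_family_on_def by auto
  have Cun: "(\<Union>v\<in>V. C v) = space N" unfolding C_def V_def by auto
  define p where "p v = measure N (C v)" for v
  have "(\<Sum>v\<in>V. p v) = measure N (\<Union>v\<in>V. C v)"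
    unfolding p_def using Vf Cs Cdisj
    by (intro finite_measure.finite_measure_finite_Union[symmetric] prob_space.finite_measure[OF N]) auto
  also have "\<dots> = 1" using Cun prob_space.prob_space[OF N] by simp
  finally have psum: "(\<Sum>v\<in>V. p v) = prob (space M)" by (simp add: prob_space)
  obtain E where E: "\<forall>v\<in>V. E v \<in> events \<and> E v \<subseteq> space M \<and> prob (E v) = p v"
    "disjoint_family_on E V" "(\<Union>v\<in>V. E v) = space M"
    using atomless_partition[OF al Vf Vne, of "space M" p] psum by (auto simp: p_def)
  define X where "X \<omega> = (\<Sum>v\<in>V. indicator (E v) \<omega> *\<^sub>R v)" for \<omega>
  have Xv: "X \<omega> = v" if "v \<in> V" "\<omega> \<in> E v" for v \<omega>
  proof -
    have "X \<omega> = indicator (E v) \<omega> *\<^sub>R v + (\<Sum>u\<in>V - {v}. indicator (E u) \<omega> *\<^sub>R u)"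
      unfolding X_def by (rule sum.remove[OF Vf that(1)])
    also have "(\<Sum>u\<in>V - {v}. indicator (E u) \<omega> *\<^sub>R u) = 0"
      using E(2) that unfolding disjoint_family_on_def
      by (intro sum.neutral) (auto simp: indicator_def)
    finally show ?thesis using that by simp
  qed
  have Xm: "X \<in> borel_measurable M"
    unfolding X_def using E(1) by (intro borel_measurable_sum borel_measurable_scaleR) auto
  have Xr: "X ` space M \<subseteq> V" using E(3) Xv by blast
  have sX: "simple_function M X"
    using Xm Xr Vf by (intro simple_function_borel_measurable) (auto intro: finite_subset)
  have pre1: "X -` B \<inter> space M = (\<Union>v\<in>V \<inter> B. E v)" for B
  proof
    show "X -` B \<inter> space M \<subseteq> (\<Union>v\<in>V \<inter> B. E v)"
    proof
      fix \<omega> assume "\<omega> \<in> X -` B \<inter> space M"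
      then obtain v where "v \<in> V" "\<omega> \<in> E v" "X \<omega> \<in> B" using E(3) by auto
      then show "\<omega> \<in> (\<Union>v\<in>V \<inter> B. E v)" using Xv by auto
    qed
  next
    show "(\<Union>v\<in>V \<inter> B. E v) \<subseteq> X -` B \<inter> space M" using Xv E(1) by auto
  qed
  have pre2: "g -` B \<inter> space N = (\<Union>v\<in>V \<inter> B. C v)" for B
    unfolding C_def V_def by auto
  have "distr M borel X = distr N borel g"
  proof (rule measure_eqI)
    show "sets (distr M borel X) = sets (distr N borel g)" by simp
    fix B assume "B \<in> sets (distr M borel X)"
    then have B: "B \<in> sets borel" by simp
    have "emeasure (distr M borel X) B = emeasure M (\<Union>v\<in>V \<inter> B. E v)"
      using B Xm by (simp add: emeasure_distr pre1)
    also have "\<dots> = (\<Sum>v\<in>V \<inter> B. emeasure M (E v))"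
      using E(1,2) Vf by (intro sum_emeasure[symmetric]) (auto intro: disjoint_family_on_mono)
    also have "\<dots> = (\<Sum>v\<in>V \<inter> B. emeasure N (C v))"
      using E(1) by (intro sum.cong) (auto simp: emeasure_eq_measure p_def finite_measure.emeasure_eq_measure[OF prob_space.finite_measure[OF N]])
    also have "\<dots> = emeasure N (\<Union>v\<in>V \<inter> B. C v)"
      using Cs Cdisj Vf by (intro sum_emeasure) (auto intro: disjoint_family_on_mono)
    also have "\<dots> = emeasure (distr N borel g) B"
      using B g by (simp add: emeasure_distr pre2 borel_measurable_simple_function)
    finally show "emeasure (distr M borel X) B = emeasure (distr N borel g) B" .
  qed
  then show ?thesis using sX by blast
qed

end


lemma simple_integrable_comp:
  fixes h :: "'b \<Rightarrow> real"
  assumes M: "prob_space M" and s: "simple_function M f"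
  shows "integrable M (\<lambda>\<omega>. h (f \<omega>))"
proof -
  have s2: "simple_function M (h \<circ> f)" using s by (rule simple_function_compose)
  then have m: "(\<lambda>\<omega>. h (f \<omega>)) \<in> borel_measurable M"
    using borel_measurable_simple_function[OF s2] by (simp add: comp_def)
  have fin: "finite ((\<lambda>\<omega>. h (f \<omega>)) ` space M)" using s2 unfolding simple_function_def by (simp add: comp_def)
  define B where "B = (\<Sum>y\<in>(\<lambda>\<omega>. h (f \<omega>)) ` space M. norm y)"
  have "norm (h (f \<omega>)) \<le> B" if "\<omega> \<in> space M" for \<omega>
    unfolding B_def using fin that by (intro member_le_sum) auto
  then show ?thesis
    using m by (intro finite_measure.integrable_const_bound[OF prob_space.finite_measure[OF M], of _ B]) auto
qed

lemma simple_L2: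
  fixes X :: "'w \<Rightarrow> 'a::euclidean_space"
  assumes M: "prob_space M" and s: "simple_function M X"
  shows "X \<in> L2 M"
  unfolding L2_def using simple_integrable_comp[OF M s, of "\<lambda>x. (norm x)\<^sup>2"] borel_measurable_simple_function[OF s]
  by auto

lemma L2_P2:
  fixes X :: "'w \<Rightarrow> 'a::euclidean_space"
  assumes M: "prob_space M" and X: "X \<in> L2 M"
  shows "law M X \<in> P2"
proof -
  have [measurable]: "X \<in> borel_measurable M" using X by (simp add: L2_def)
  have "integrable (distr M borel X) (\<lambda>x. (norm x)\<^sup>2)"
    using X by (subst integrable_distr_eq) (auto simp: L2_def)
  then show ?thesis unfolding P2_def law_def
    using prob_space.prob_space_distr[OF M, of X borel] by auto
qed

lemma W2_bound:
  fixes X Z :: "'b \<Rightarrow> 'a::euclidean_space"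
  assumes N: "prob_space N" and [measurable]: "X \<in> borel_measurable N" "Z \<in> borel_measurable N"
  shows "W2 (distr N borel X) (distr N borel Z) \<le> sqrt (\<integral>\<omega>. (norm (X \<omega> - Z \<omega>))\<^sup>2 \<partial>N)"
    and "0 \<le> W2 (distr N borel X) (distr N borel Z)"
proof -
  define \<pi> where "\<pi> = distr N (borel :: ('a \<times> 'a) measure) (\<lambda>\<omega>. (X \<omega>, Z \<omega>))"
  have [measurable]: "fst \<in> borel_measurable (borel :: ('a \<times> 'a) measure)"
    "snd \<in> borel_measurable (borel :: ('a \<times> 'a) measure)"
    by (intro borel_measurable_continuous_onI continuous_intros)+
  have pm[measurable]: "(\<lambda>\<omega>. (X \<omega>, Z \<omega>)) \<in> N \<rightarrow>\<^sub>M (borel :: ('a \<times> 'a) measure)" by measurable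
  have c: "\<pi> \<in> couplings (distr N borel X) (distr N borel Z)"
    unfolding couplings_def
  proof (intro CollectI conjI)
    show "prob_space \<pi>" unfolding \<pi>_def using N pm by (rule prob_space.prob_space_distr)
    show "sets \<pi> = sets borel" unfolding \<pi>_def by simp
    show "distr \<pi> borel fst = distr N borel X" unfolding \<pi>_def
      by (subst distr_distr) (auto simp: comp_def)
    show "distr \<pi> borel snd = distr N borel Z" unfolding \<pi>_def
      by (subst distr_distr) (auto simp: comp_def)
  qed
  have ival: "(\<integral>p. (norm (fst p - snd p))\<^sup>2 \<partial>\<pi>) = (\<integral>\<omega>. (norm (X \<omega> - Z \<omega>))\<^sup>2 \<partial>N)"
    unfolding \<pi>_def by (subst integral_distr) auto
  have nn: "0 \<le> (\<integral>p. (norm (fst p - snd p))\<^sup>2 \<partial>\<rho>)" for \<rho> :: "('a \<times> 'a) measure"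
    by (rule Bochner_Integration.integral_nonneg) auto
  have bdd: "bdd_below ((\<lambda>\<rho>. \<integral>p. (norm (fst p - snd p))\<^sup>2 \<partial>\<rho>) ` couplings (distr N borel X) (distr N borel Z))"
    using nn by (intro bdd_belowI[of _ 0]) auto
  have "(INF \<rho>\<in>couplings (distr N borel X) (distr N borel Z). \<integral>p. (norm (fst p - snd p))\<^sup>2 \<partial>\<rho>)
      \<le> (\<integral>\<omega>. (norm (X \<omega> - Z \<omega>))\<^sup>2 \<partial>N)"
    using cINF_lower[OF bdd c] ival by simp
  then show "W2 (distr N borel X) (distr N borel Z) \<le> sqrt (\<integral>\<omega>. (norm (X \<omega> - Z \<omega>))\<^sup>2 \<partial>N)"
    unfolding W2_def by (rule real_sqrt_le_mono)
  have "0 \<le> (INF \<rho>\<in>couplings (distr N borel X) (distr N borel Z). \<integral>p. (norm (fst p - snd p))\<^sup>2 \<partial>\<rho>)"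
    using c nn by (intro cINF_greatest) auto
  then show "0 \<le> W2 (distr N borel X) (distr N borel Z)" unfolding W2_def by simp
qed



lemma step1:
  fixes M :: "'w measure" and W :: "'a::euclidean_space \<Rightarrow> 'a measure \<Rightarrow> 'a"
    and X0 :: "'w \<Rightarrow> 'a"
  assumes M: "prob_space M" and al: "atomless M" and cont: "continuous_W2 W" and b: "\<beta> > 0"
    and mono: "\<And>X Y. X \<in> L2 M \<Longrightarrow> Y \<in> L2 M \<Longrightarrow>
        (\<integral>\<omega>. (W (X \<omega>) (law M X) - W (Y \<omega>) (law M Y)) \<bullet> (X \<omega> - Y \<omega>) \<partial>M)
        \<ge> \<beta> * (\<integral>\<omega>. (norm (W (X \<omega>) (law M X) - W (Y \<omega>) (law M Y)))\<^sup>2 \<partial>M)"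
    and s: "simple_function M X0"
  shows "dist (W x (law M X0)) (W y (law M X0)) \<le> 1 / \<beta> * dist x y"
proof -
  interpret prob_space M by (rule M)
  have "\<exists>A\<in>events. 0 < prob A \<and> prob A \<le> inverse (real (Suc n))" for n
    using atomless_small[OF al, of "space M" "inverse (real (Suc n))"] prob_space by auto
  then obtain As where As: "\<And>n. As n \<in> events" "\<And>n. 0 < prob (As n)"
      "\<And>n. prob (As n) \<le> inverse (real (Suc n))" by metis
  have X0m[measurable]: "X0 \<in> borel_measurable M" using s by (rule borel_measurable_simple_function)
  define Xn where "Xn n \<omega> = (if \<omega> \<in> As n then x else X0 \<omega>)" for n \<omega>
  define Yn where "Yn n \<omega> = (if \<omega> \<in> As n then y else X0 \<omega>)" for n \<omega>
  have sXn: "simple_function M (Xn n)" for n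
  proof (rule simple_function_borel_measurable)
    show "Xn n \<in> borel_measurable M" unfolding Xn_def
      using As(1)[of n] by (intro measurable_If_set) auto
    have "Xn n ` space M \<subseteq> insert x (X0 ` space M)" unfolding Xn_def by auto
    then show "finite (Xn n ` space M)" using s unfolding simple_function_def by (auto intro: finite_subset)
  qed
  have sYn: "simple_function M (Yn n)" for n
  proof (rule simple_function_borel_measurable)
    show "Yn n \<in> borel_measurable M" unfolding Yn_def
      using As(1)[of n] by (intro measurable_If_set) auto
    have "Yn n ` space M \<subseteq> insert y (X0 ` space M)" unfolding Yn_def by auto
    then show "finite (Yn n ` space M)" using s unfolding simple_function_def by (auto intro: finite_subset)
  qed
  have L2X: "Xn n \<in> L2 M" "Yn n \<in> L2 M" "X0 \<in> L2 M" for n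
    using simple_L2[OF M] sXn sYn s by auto
  define \<nu> where "\<nu> = law M X0"
  define lX where "lX n = law M (Xn n)" for n
  define lY where "lY n = law M (Yn n)" for n
  define c where "c n = (W x (lX n) - W y (lY n)) \<bullet> (x - y)" for n
  define d where "d n = (norm (W x (lX n) - W y (lY n)))\<^sup>2" for n
  have ineq: "\<beta> * d n \<le> c n" for n
  proof -
    have Ai: "measure M (As n \<inter> space M) = prob (As n)" using As(1)[of n] by (simp add: Int_absorb2 sets.sets_into_space)
    have lhs: "(\<integral>\<omega>. (W (Xn n \<omega>) (lX n) - W (Yn n \<omega>) (lY n)) \<bullet> (Xn n \<omega> - Yn n \<omega>) \<partial>M) = c n * prob (As n)"
    proof -
      have "(\<lambda>\<omega>. (W (Xn n \<omega>) (lX n) - W (Yn n \<omega>) (lY n)) \<bullet> (Xn n \<omega> - Yn n \<omega>)) = (\<lambda>\<omega>. c n * indicator (As n) \<omega>)"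
        unfolding Xn_def Yn_def c_def by (auto simp: indicator_def)
      then show ?thesis using Ai by simp
    qed
    define f where "f \<omega> = (norm (W (Xn n \<omega>) (lX n) - W (Yn n \<omega>) (lY n)))\<^sup>2" for \<omega>
    have fi: "integrable M f"
      using simple_integrable_comp[OF M simple_function_Pair[OF sXn[of n] sYn[of n]],
          of "\<lambda>p. (norm (W (fst p) (lX n) - W (snd p) (lY n)))\<^sup>2"]
      unfolding f_def by simp
    have "d n * prob (As n) = (\<integral>\<omega>. d n * indicator (As n) \<omega> \<partial>M)" using Ai by simp
    also have "\<dots> \<le> (\<integral>\<omega>. f \<omega> \<partial>M)"
    proof (rule integral_mono[OF _ fi])
      show "integrable M (\<lambda>\<omega>. d n * indicator (As n) \<omega>)" using As(1)[of n] by (intro integrable_mult_right integrable_real_indicator) (auto simp: emeasure_eq_measure)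
      show "d n * indicator (As n) \<omega> \<le> f \<omega>" for \<omega>
        unfolding f_def d_def Xn_def Yn_def by (auto simp: indicator_def)
    qed
    finally have "\<beta> * (d n * prob (As n)) \<le> \<beta> * (\<integral>\<omega>. f \<omega> \<partial>M)" using b by simp
    also have "\<dots> \<le> c n * prob (As n)"
      using mono[OF L2X(1)[of n] L2X(2)[of n]] lhs unfolding f_def lX_def lY_def by simp
    finally have "(\<beta> * d n) * prob (As n) \<le> c n * prob (As n)" by (simp add: algebra_simps)
    then show ?thesis using As(2)[of n] by simp
  qed
  have W2lim: "(\<lambda>n. W2 (law M (Z n)) \<nu>) \<longlonglongrightarrow> 0"
    if Zdef: "\<And>n \<omega>. Z n \<omega> = (if \<omega> \<in> As n then z else X0 \<omega>)" and sZ: "\<And>n. simple_function M (Z n)" for Z z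
  proof -
    define K where "K = (\<Sum>v\<in>X0 ` space M. (norm (z - v))\<^sup>2)"
    have Kb: "(norm (z - X0 \<omega>))\<^sup>2 \<le> K" if "\<omega> \<in> space M" for \<omega>
      unfolding K_def using s that unfolding simple_function_def by (intro member_le_sum) auto
    have K0: "0 \<le> K" unfolding K_def by (intro sum_nonneg) auto
    have Zm: "Z n \<in> borel_measurable M" for n using sZ by (rule borel_measurable_simple_function)
    have ub: "W2 (law M (Z n)) \<nu> \<le> sqrt (K * inverse (real (Suc n)))" for n
    proof -
      have "W2 (law M (Z n)) \<nu> \<le> sqrt (\<integral>\<omega>. (norm (Z n \<omega> - X0 \<omega>))\<^sup>2 \<partial>M)"
        unfolding law_def \<nu>_def by (rule W2_bound(1)[OF M Zm X0m])
      also have "(\<integral>\<omega>. (norm (Z n \<omega> - X0 \<omega>))\<^sup>2 \<partial>M) \<le> (\<integral>\<omega>. K * indicator (As n) \<omega> \<partial>M)"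
      proof (rule integral_mono)
        show "integrable M (\<lambda>\<omega>. (norm (Z n \<omega> - X0 \<omega>))\<^sup>2)"
          using simple_integrable_comp[OF M simple_function_Pair[OF sZ[of n] s],
              of "\<lambda>p. (norm (fst p - snd p))\<^sup>2"] by simp
        show "integrable M (\<lambda>\<omega>. K * indicator (As n) \<omega>)" using As(1)[of n] by (intro integrable_mult_right integrable_real_indicator) (auto simp: emeasure_eq_measure)
        show "(norm (Z n \<omega> - X0 \<omega>))\<^sup>2 \<le> K * indicator (As n) \<omega>" if "\<omega> \<in> space M" for \<omega>
          using Kb[OF that] by (auto simp: Zdef indicator_def)
      qed
      also have "\<dots> = K * prob (As n)" using As(1)[of n] by (simp add: Int_absorb2 sets.sets_into_space)
      also have "\<dots> \<le> K * inverse (real (Suc n))" using As(3)[of n] K0 by (intro mult_left_mono) auto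
      finally show ?thesis by (simp add: real_sqrt_le_mono order_trans)
    qed
    have lb: "0 \<le> W2 (law M (Z n)) \<nu>" for n
      unfolding law_def \<nu>_def by (rule W2_bound(2)[OF M Zm X0m])
    have "(\<lambda>n. sqrt (K * inverse (real (Suc n)))) \<longlonglongrightarrow> sqrt (K * 0)"
      by (intro tendsto_real_sqrt tendsto_mult tendsto_const LIMSEQ_inverse_real_of_nat)
    then have "(\<lambda>n. sqrt (K * inverse (real (Suc n)))) \<longlonglongrightarrow> 0" by simp
    note lim0 = this
    have e1: "\<forall>\<^sub>F n in sequentially. 0 \<le> W2 (law M (Z n)) \<nu>" using lb by simp
    have e2: "\<forall>\<^sub>F n in sequentially. W2 (law M (Z n)) \<nu> \<le> sqrt (K * inverse (real (Suc n)))"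
      using ub by simp
    show ?thesis by (rule real_tendsto_sandwich[OF e1 e2 tendsto_const lim0])
  qed
  have P2n: "\<nu> \<in> P2" "lX n \<in> P2" "lY n \<in> P2" for n
    unfolding \<nu>_def lX_def lY_def using L2_P2[OF M] L2X by auto
  have C: "\<And>x xs \<mu> \<mu>s. \<mu> \<in> P2 \<Longrightarrow> (\<forall>n. \<mu>s n \<in> P2) \<Longrightarrow> xs \<longlonglongrightarrow> x \<Longrightarrow>
      (\<lambda>n. W2 (\<mu>s n) \<mu>) \<longlonglongrightarrow> 0 \<Longrightarrow> (\<lambda>n. W (xs n) (\<mu>s n)) \<longlonglongrightarrow> W x \<mu>"
    using cont unfolding continuous_W2_def by blast
  have wX: "(\<lambda>n. W2 (lX n) \<nu>) \<longlonglongrightarrow> 0" unfolding lX_def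
    by (rule W2lim[of Xn x]) (auto simp: Xn_def sXn)
  have wY: "(\<lambda>n. W2 (lY n) \<nu>) \<longlonglongrightarrow> 0" unfolding lY_def
    by (rule W2lim[of Yn y]) (auto simp: Yn_def sYn)
  have cX: "(\<lambda>n. W x (lX n)) \<longlonglongrightarrow> W x \<nu>"
    using C[of \<nu> lX "\<lambda>_. x" x] P2n wX by simp
  have cY: "(\<lambda>n. W y (lY n)) \<longlonglongrightarrow> W y \<nu>"
    using C[of \<nu> lY "\<lambda>_. y" y] P2n wY by simp
  define \<Delta> where "\<Delta> = W x \<nu> - W y \<nu>"
  have "c \<longlonglongrightarrow> \<Delta> \<bullet> (x - y)" unfolding c_def \<Delta>_def
    by (intro tendsto_intros cX cY)
  moreover have "(\<lambda>n. \<beta> * d n) \<longlonglongrightarrow> \<beta> * (norm \<Delta>)\<^sup>2" unfolding d_def \<Delta>_def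
    by (intro tendsto_intros cX cY)
  ultimately have key: "\<beta> * (norm \<Delta>)\<^sup>2 \<le> \<Delta> \<bullet> (x - y)"
    using ineq by (intro LIMSEQ_le) auto
  also have "\<dots> \<le> norm \<Delta> * norm (x - y)" by (rule norm_cauchy_schwarz)
  finally have "\<beta> * (norm \<Delta>)\<^sup>2 \<le> norm \<Delta> * norm (x - y)" .
  note h = this
  have "norm \<Delta> \<le> 1 / \<beta> * norm (x - y)"
  proof (cases "norm \<Delta> = 0")
    case True then show ?thesis using b by simp
  next
    case False
    have "norm \<Delta> * (\<beta> * norm \<Delta>) \<le> norm \<Delta> * norm (x - y)" using h by (simp add: power2_eq_square algebra_simps)
    then have "\<beta> * norm \<Delta> \<le> norm (x - y)" using False by (simp add: mult_le_cancel_left)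
    then show ?thesis using b by (simp add: field_simps)
  qed
  then show ?thesis unfolding \<Delta>_def \<nu>_def by (simp add: dist_norm)
qed



lemma step2:
  fixes M :: "'w measure" and W :: "'a::euclidean_space \<Rightarrow> 'a measure \<Rightarrow> 'a"
  assumes M: "prob_space M" and al: "atomless M" and cont: "continuous_W2 W" and b: "\<beta> > 0"
    and mono: "\<And>X Y. X \<in> L2 M \<Longrightarrow> Y \<in> L2 M \<Longrightarrow>
        (\<integral>\<omega>. (W (X \<omega>) (law M X) - W (Y \<omega>) (law M Y)) \<bullet> (X \<omega> - Y \<omega>) \<partial>M)
        \<ge> \<beta> * (\<integral>\<omega>. (norm (W (X \<omega>) (law M X) - W (Y \<omega>) (law M Y)))\<^sup>2 \<partial>M)"
    and mu: "\<mu> \<in> P2"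
  shows "dist (W x \<mu>) (W y \<mu>) \<le> 1 / \<beta> * dist x y"
proof -
  have N: "prob_space \<mu>" and Ns: "sets \<mu> = sets borel" and Ni: "integrable \<mu> (\<lambda>z. (norm z)\<^sup>2)"
    using mu by (auto simp: P2_def)
  have sp: "space \<mu> = UNIV" using sets_eq_imp_space_eq[OF Ns] by simp
  have idm: "(\<lambda>z. z) \<in> borel_measurable \<mu>" using Ns by (rule measurable_ident_sets)
  obtain F where F: "\<And>i. simple_function \<mu> (F i)" "\<And>z. z \<in> space \<mu> \<Longrightarrow> (\<lambda>i. F i z) \<longlonglongrightarrow> z"
    "\<And>i z. z \<in> space \<mu> \<Longrightarrow> dist (F i z) 0 \<le> 2 * dist z 0"
    using borel_measurable_implies_sequence_metric[OF idm, of 0] by blast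
  have "\<exists>X. simple_function M X \<and> distr M borel X = distr \<mu> borel (F i)" for i
    using prob_space.atomless_realize[OF M al N F(1)] by blast
  then obtain X0 where X0: "\<And>i. simple_function M (X0 i)" "\<And>i. distr M borel (X0 i) = distr \<mu> borel (F i)"
    by metis
  have mu_eq: "distr \<mu> borel (\<lambda>z. z) = \<mu>" using Ns by (intro distr_id2) simp
  have Fm: "F i \<in> borel_measurable \<mu>" for i using F(1) by (rule borel_measurable_simple_function)
  define I where "I i = (\<integral>z. (norm (F i z - z))\<^sup>2 \<partial>\<mu>)" for i
  have ub: "W2 (law M (X0 i)) \<mu> \<le> sqrt (I i)" for i
    using W2_bound(1)[OF N Fm idm] unfolding law_def X0(2) mu_eq I_def .
  have lb: "0 \<le> W2 (law M (X0 i)) \<mu>" for i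
    using W2_bound(2)[OF N Fm idm] unfolding law_def X0(2) mu_eq .
  have "I \<longlonglongrightarrow> (\<integral>z. 0 \<partial>\<mu>)" unfolding I_def
  proof (rule integral_dominated_convergence[where w = "\<lambda>z. 9 * (norm z)\<^sup>2"])
    show "(\<lambda>z. 0::real) \<in> borel_measurable \<mu>" by simp
    show "(\<lambda>z. (norm (F i z - z))\<^sup>2) \<in> borel_measurable \<mu>" for i
      using Fm idm by measurable
    show "integrable \<mu> (\<lambda>z. 9 * (norm z)\<^sup>2)" using Ni by simp
    show "AE z in \<mu>. (\<lambda>i. (norm (F i z - z))\<^sup>2) \<longlonglongrightarrow> 0"
    proof (rule AE_I2)
      fix z assume z: "z \<in> space \<mu>"
      have "(\<lambda>i. F i z - z) \<longlonglongrightarrow> z - z" by (intro tendsto_diff F(2)[OF z] tendsto_const)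
      then have "(\<lambda>i. norm (F i z - z)) \<longlonglongrightarrow> 0" using tendsto_norm_zero by fastforce
      then have "(\<lambda>i. (norm (F i z - z))\<^sup>2) \<longlonglongrightarrow> 0\<^sup>2" by (rule tendsto_power)
      then show "(\<lambda>i. (norm (F i z - z))\<^sup>2) \<longlonglongrightarrow> 0" by simp
    qed
    show "AE z in \<mu>. norm ((norm (F i z - z))\<^sup>2) \<le> 9 * (norm z)\<^sup>2" for i
    proof (rule AE_I2)
      fix z assume z: "z \<in> space \<mu>"
      have "norm (F i z) \<le> 2 * norm z" using F(3)[OF z, of i] by simp
      then have "norm (F i z - z) \<le> 3 * norm z" using norm_triangle_ineq4[of "F i z" z] by simp
      then have "(norm (F i z - z))\<^sup>2 \<le> (3 * norm z)\<^sup>2" by (intro power_mono) auto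
      then show "norm ((norm (F i z - z))\<^sup>2) \<le> 9 * (norm z)\<^sup>2" by (simp add: power_mult_distrib)
    qed
  qed
  then have "I \<longlonglongrightarrow> 0" by simp
  then have "(\<lambda>i. sqrt (I i)) \<longlonglongrightarrow> sqrt 0" by (rule tendsto_real_sqrt)
  then have lim0: "(\<lambda>i. sqrt (I i)) \<longlonglongrightarrow> 0" by simp
  have e1: "\<forall>\<^sub>F n in sequentially. 0 \<le> W2 (law M (X0 n)) \<mu>" using lb by simp
  have e2: "\<forall>\<^sub>F n in sequentially. W2 (law M (X0 n)) \<mu> \<le> sqrt (I n)" using ub by simp
  have w: "(\<lambda>n. W2 (law M (X0 n)) \<mu>) \<longlonglongrightarrow> 0"
    by (rule real_tendsto_sandwich[OF e1 e2 tendsto_const lim0])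
  have C: "\<And>x xs \<mu> \<mu>s. \<mu> \<in> P2 \<Longrightarrow> (\<forall>n. \<mu>s n \<in> P2) \<Longrightarrow> xs \<longlonglongrightarrow> x \<Longrightarrow>
      (\<lambda>n. W2 (\<mu>s n) \<mu>) \<longlonglongrightarrow> 0 \<Longrightarrow> (\<lambda>n. W (xs n) (\<mu>s n)) \<longlonglongrightarrow> W x \<mu>"
    using cont unfolding continuous_W2_def by blast
  have P2n: "\<forall>n. law M (X0 n) \<in> P2" using L2_P2[OF M] simple_L2[OF M X0(1)] by blast
  have cX: "(\<lambda>n. W x (law M (X0 n))) \<longlonglongrightarrow> W x \<mu>"
    using C[of \<mu> "\<lambda>n. law M (X0 n)" "\<lambda>_. x" x] mu P2n w by simp
  have cY: "(\<lambda>n. W y (law M (X0 n))) \<longlonglongrightarrow> W y \<mu>"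
    using C[of \<mu> "\<lambda>n. law M (X0 n)" "\<lambda>_. y" y] mu P2n w by simp
  have "(\<lambda>n. dist (W x (law M (X0 n))) (W y (law M (X0 n)))) \<longlonglongrightarrow> dist (W x \<mu>) (W y \<mu>)"
    by (rule tendsto_dist[OF cX cY])
  moreover have "dist (W x (law M (X0 n))) (W y (law M (X0 n))) \<le> 1 / \<beta> * dist x y" for n
    by (rule step1[OF M al cont b mono X0(1)])
  ultimately show ?thesis by (intro LIMSEQ_le_const2) auto
qed


theorem lemma4p7:
  fixes M :: "'w::polish_space measure"
    and W :: "'a::euclidean_space \<Rightarrow> 'a measure \<Rightarrow> 'a"
    and \<beta> :: real
  assumes "prob_space M" and "sets M = sets borel" and "atomless M"
    and "continuous_W2 W"
    and "\<beta> > 0"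
    and mono: "\<And>X Y. X \<in> L2 M \<Longrightarrow> Y \<in> L2 M \<Longrightarrow>
        (\<integral>\<omega>. (W (X \<omega>) (law M X) - W (Y \<omega>) (law M Y)) \<bullet> (X \<omega> - Y \<omega>) \<partial>M)
        \<ge> \<beta> * (\<integral>\<omega>. (norm (W (X \<omega>) (law M X) - W (Y \<omega>) (law M Y)))\<^sup>2 \<partial>M)"
  shows "(\<forall>X\<in>L2 M. \<forall>Y\<in>L2 M.
            (\<integral>\<omega>. (norm (W (X \<omega>) (law M X) - W (Y \<omega>) (law M Y)))\<^sup>2 \<partial>M)
            \<le> 1 / \<beta>\<^sup>2 * (\<integral>\<omega>. (norm (X \<omega> - Y \<omega>))\<^sup>2 \<partial>M))
      \<and> (\<forall>\<mu>\<in>P2. (1 / \<beta>)-lipschitz_on UNIV (\<lambda>x. W x \<mu>))"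
proof -
  have P1: "\<forall>X\<in>L2 M. \<forall>Y\<in>L2 M.
            (\<integral>\<omega>. (norm (W (X \<omega>) (law M X) - W (Y \<omega>) (law M Y)))\<^sup>2 \<partial>M)
            \<le> 1 / \<beta>\<^sup>2 * (\<integral>\<omega>. (norm (X \<omega> - Y \<omega>))\<^sup>2 \<partial>M)"
  proof (intro ballI)
    fix X Y :: "'w \<Rightarrow> 'a" assume X: "X \<in> L2 M" and Y: "Y \<in> L2 M"
    show "(\<integral>\<omega>. (norm (W (X \<omega>) (law M X) - W (Y \<omega>) (law M Y)))\<^sup>2 \<partial>M)
            \<le> 1 / \<beta>\<^sup>2 * (\<integral>\<omega>. (norm (X \<omega> - Y \<omega>))\<^sup>2 \<partial>M)"
      by (rule part_i[OF \<open>\<beta> > 0\<close> mono[OF X Y] L2_diff_sq_int[OF X Y]])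
  qed
  have P2': "\<forall>\<mu>\<in>P2. (1 / \<beta>)-lipschitz_on UNIV (\<lambda>x. W x \<mu>)"
  proof (intro ballI lipschitz_onI)
    fix \<mu> :: "'a measure" and x y :: 'a assume mu: "\<mu> \<in> P2"
    show "dist (W x \<mu>) (W y \<mu>) \<le> 1 / \<beta> * dist x y"
      by (rule step2[OF \<open>prob_space M\<close> \<open>atomless M\<close> \<open>continuous_W2 W\<close> \<open>\<beta> > 0\<close> mono mu])
  next
    show "0 \<le> 1 / \<beta>" using \<open>\<beta> > 0\<close> by simp
  qed
  show ?thesis using P1 P2' by blast
qed

end
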